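(* Let $d\in\mathbb{N}$ and let $\mathcal{P}$ be a partition of $\mathbb{R}^{d}$. Suppose there exists $M\in(0,\infty)$ such that every $X\in\mathcal{P}$ is Lebesgue measurable with $m(X)<M$. Then for any $\epsilon\in(0,\infty)$ there exists $\vec{p}\in\mathbb{R}^{d}$ such that $|\mathcal{N}_{\epsilon}(\vec{p})|\geq d+1$.
   Context: $m$ denotes Lebesgue measure on $\mathbb{R}^d$. On $\mathbb{R}^d$ use $d_{max}(\vec{x},\vec{y})=\max_i|x_i-y_i|$ and the closed ball $\overline{B}_{\epsilon}(\vec{p})=\{\vec{x}: d_{max}(\vec{x},\vec{p})\le\epsilon\}$. For a partition $\mathcal{P}$, $\mathcal{N}_{\epsilon}(\vec{p})=\{X\in\mathcal{P}: X\cap\overline{B}_{\epsilon}(\vec{p})\neq\emptyset\}$. *)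

theory Defs
  imports "HOL-Analysis.Analysis"
begin

text \<open>Points of R^d are vectors real^'n with d = CARD('n).\<close>

definition dmax :: "real^'n \<Rightarrow> real^'n \<Rightarrow> real" where
  "dmax x y = Max (range (\<lambda>i. \<bar>x $ i - y $ i\<bar>))"

definition maxball :: "real \<Rightarrow> real^'n \<Rightarrow> (real^'n) set" where
  "maxball \<epsilon> p = {x. dmax x p \<le> \<epsilon>}"

definition is_partition :: "'a set set \<Rightarrow> bool" where
  "is_partition P \<longleftrightarrow> (\<forall>X\<in>P. X \<noteq> {}) \<and> \<Union>P = UNIV \<and>
     (\<forall>X\<in>P. \<forall>Y\<in>P. X \<noteq> Y \<longrightarrow> X \<inter> Y = {})"

definition nbhd :: "(real^'n) set set \<Rightarrow> real \<Rightarrow> real^'n \<Rightarrow> (real^'n) set set" where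
  "nbhd P \<epsilon> p = {X\<in>P. X \<inter> maxball \<epsilon> p \<noteq> {}}"

end

theory Submission
  imports Defs
begin
lemma maxball_cbox: "maxball e (p::real^'n) = cbox (\<chi> i. p$i - e) (\<chi> i. p$i + e)"
proof -
  have "dmax x p \<le> e \<longleftrightarrow> (\<forall>i. \<bar>x $ i - p $ i\<bar> \<le> e)" for x
    unfolding dmax_def by (subst Max_le_iff) auto
  then show ?thesis unfolding maxball_def by (auto simp: mem_box_cart abs_le_iff diff_le_eq le_diff_eq add.commute)
qed

lemma maxball_measure:
  assumes e: "0 \<le> e" shows "measure lebesgue (maxball e (p::real^'n)) = (2*e)^CARD('n)"
proof -
  have ne: "cbox (\<chi> i. p$i - e) (\<chi> i. p$i + e) \<noteq> {}"
  proof -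
    have "p \<in> cbox (\<chi> i. p$i - e) (\<chi> i. p$i + e)" using e by (simp add: mem_box_cart)
    then show ?thesis by blast
  qed
  have "measure lebesgue (cbox (\<chi> i. p$i - e) (\<chi> i. p$i + e)) = Henstock_Kurzweil_Integration.content (cbox (\<chi> i. p$i - e) (\<chi> i. p$i + e))"
    by (subst measure_completion) auto
  also have "\<dots> = (2*e)^CARD('n)"
    by (subst content_cbox_cart[OF ne]) simp
  finally show ?thesis by (simp add: maxball_cbox)
qed


lemma rtrancl_ivt:
  assumes "(x,y) \<in> R\<^sup>*" "\<forall>(a,b)\<in>R. b j \<le> Suc (a j)" "x j \<le> t" "t \<le> y j"
  shows "\<exists>z. (x,z) \<in> R\<^sup>* \<and> z j = (t::nat)"
  using assms(1,4)
proof (induction rule: rtrancl_induct)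
  case base
  then have "x j = t" using assms(3) by simp
  then show ?case by blast
next
  case (step y w)
  show ?case
  proof (cases "t \<le> y j")
    case True then show ?thesis using step.IH by simp
  next
    case False
    have "w j \<le> Suc (y j)" using assms(2) step.hyps(2) by blast
    with False step.prems have "t = w j" by linarith
    moreover have "(x,w) \<in> R\<^sup>*" using rtrancl_into_rtrancl[OF step.hyps(1) step.hyps(2)] .
    ultimately show ?thesis by blast
  qed
qed

lemma exists_heavy:
  fixes P :: "(real^'n) set set"
  assumes part: "is_partition P" and meas: "\<forall>X\<in>P. X \<in> sets lebesgue"
   and fin: "finite (nbhd P \<delta> pt)" and card: "card (nbhd P \<delta> pt) \<le> CARD('n)" and \<delta>: "0 < \<delta>"
  shows "\<exists>X\<in>P. measure lebesgue (X \<inter> maxball \<delta> pt) \<ge> (2*\<delta>)^CARD('n) / CARD('n)"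
proof (rule ccontr)
  assume "\<not> ?thesis"
  hence lt: "\<forall>X\<in>P. measure lebesgue (X \<inter> maxball \<delta> pt) < (2*\<delta>)^CARD('n) / CARD('n)" by auto
  let ?B = "maxball \<delta> pt"
  let ?N = "nbhd P \<delta> pt"
  have Bl: "?B \<in> lmeasurable" by (simp add: maxball_cbox lmeasurable_cbox)
  have XBf: "X \<inter> ?B \<in> fmeasurable lebesgue" if "X \<in> P" for X
    using fmeasurable_Int_fmeasurable[OF Bl, of X] meas that by (simp add: Int_commute)
  have cover: "(\<Union>X\<in>?N. X \<inter> ?B) = ?B"
  proof
    show "?B \<subseteq> (\<Union>X\<in>?N. X \<inter> ?B)"
    proof
      fix x assume x: "x \<in> ?B"
      from part have "x \<in> \<Union>P" unfolding is_partition_def by simp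
      then obtain X where "X \<in> P" "x \<in> X" by blast
      with x show "x \<in> (\<Union>X\<in>?N. X \<inter> ?B)" unfolding nbhd_def by blast
    qed
  qed auto
  have disj: "disjoint_family_on (\<lambda>X. X \<inter> ?B) ?N"
    unfolding disjoint_family_on_def
  proof (intro ballI impI)
    fix X Y assume "X \<in> ?N" "Y \<in> ?N" "X \<noteq> Y"
    then have "X \<inter> Y = {}" using part unfolding is_partition_def nbhd_def by blast
    then show "X \<inter> ?B \<inter> (Y \<inter> ?B) = {}" by blast
  qed
  have NP: "?N \<subseteq> P" unfolding nbhd_def by blast
  have "measure lebesgue (\<Union>X\<in>?N. X \<inter> ?B) = (\<Sum>X\<in>?N. measure lebesgue (X \<inter> ?B))"
    apply (rule measure_finite_Union[OF fin])
    using XBf NP by (auto simp: disj fmeasurable_def) (metis subsetD less_irrefl)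
  hence eq: "(2*\<delta>)^CARD('n) = (\<Sum>X\<in>?N. measure lebesgue (X \<inter> ?B))"
    using cover maxball_measure[of \<delta> pt] \<delta> by simp
  have Nne: "?N \<noteq> {}"
  proof
    assume "?N = {}"
    with eq \<delta> show False by simp
  qed
  have "(\<Sum>X\<in>?N. measure lebesgue (X \<inter> ?B)) < (\<Sum>X\<in>?N. (2*\<delta>)^CARD('n) / CARD('n))"
    using lt NP by (intro sum_strict_mono[OF fin Nne]) auto
  also have "\<dots> = card ?N * ((2*\<delta>)^CARD('n) / CARD('n))" by simp
  also have "\<dots> \<le> CARD('n) * ((2*\<delta>)^CARD('n) / CARD('n))"
    using card \<delta> by (intro mult_right_mono) auto
  also have "\<dots> = (2*\<delta>)^CARD('n)" by simp
  finally have "(\<Sum>X\<in>?N. measure lebesgue (X \<inter> ?B)) < (2*\<delta>)^CARD('n)" .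
  then show False using eq by linarith
qed


lemma maxball_coord: "y \<in> maxball e q \<longleftrightarrow> (\<forall>i. \<bar>y$i - q$i\<bar> \<le> e)"
  unfolding maxball_def dmax_def by (subst Max_le_iff) auto

theorem mainTheorem3:
  fixes P :: "(real^'n) set set" and M \<epsilon> :: real
  assumes "is_partition P"
    and "0 < M"
    and "\<forall>X\<in>P. X \<in> sets lebesgue \<and> emeasure lebesgue X < ennreal M"
    and "0 < \<epsilon>"
  shows "\<exists>p :: real^'n. infinite (nbhd P \<epsilon> p) \<or> CARD('n) + 1 \<le> card (nbhd P \<epsilon> p)"
proof (rule ccontr)
  assume nt: "\<not> ?thesis"
  have H: "finite (nbhd P \<epsilon> q) \<and> card (nbhd P \<epsilon> q) \<le> CARD('n)" for q
  proof -
    have "\<not> (infinite (nbhd P \<epsilon> q) \<or> CARD('n) + 1 \<le> card (nbhd P \<epsilon> q))" using nt by blast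
    then show ?thesis by simp
  qed
  define d where "d = CARD('n)"
  have dpos: "0 < d" unfolding d_def by simp
  define \<delta> where "\<delta> = \<epsilon>/2"
  have \<delta>pos: "0 < \<delta>" using assms(4) by (simp add: \<delta>_def)
  define c where "c = (2*\<delta>)^d / d"
  have cpos: "0 < c" using dpos \<delta>pos by (simp add: c_def)
  have meas: "\<forall>X\<in>P. X \<in> sets lebesgue" using assms(3) by blast
  have bm: "maxball \<delta> q \<subseteq> maxball \<epsilon> q" for q
  proof
    fix y assume "y \<in> maxball \<delta> q"
    then have "\<forall>i. \<bar>y$i - q$i\<bar> \<le> \<delta>" by (simp add: maxball_coord)
    moreover have "\<delta> \<le> \<epsilon>" using assms(4) unfolding \<delta>_def by simp
    ultimately have "\<forall>i. \<bar>y$i - q$i\<bar> \<le> \<epsilon>" by (meson order_trans)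
    then show "y \<in> maxball \<epsilon> q" by (simp add: maxball_coord)
  qed
  have nbmono: "nbhd P \<delta> q \<subseteq> nbhd P \<epsilon> q" for q
    unfolding nbhd_def using bm by blast
  have ex: "\<exists>X. X \<in> P \<and> measure lebesgue (X \<inter> maxball \<delta> q) \<ge> c" for q
  proof -
    have f1: "finite (nbhd P \<delta> q)" using H[of q] nbmono[of q] by (meson finite_subset)
    have "card (nbhd P \<delta> q) \<le> card (nbhd P \<epsilon> q)"
      using H[of q] nbmono[of q] by (intro card_mono) auto
    also have "\<dots> \<le> CARD('n)" using H[of q] by simp
    finally have f2: "card (nbhd P \<delta> q) \<le> CARD('n)" .
    obtain X where "X \<in> P" "measure lebesgue (X \<inter> maxball \<delta> q) \<ge> (2*\<delta>)^CARD('n) / CARD('n)"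
      using exists_heavy[OF assms(1) meas f1 f2 \<delta>pos] by blast
    then show ?thesis unfolding c_def d_def by blast
  qed
  define col where "col q = (SOME X. X \<in> P \<and> measure lebesgue (X \<inter> maxball \<delta> q) \<ge> c)" for q
  have col: "col q \<in> P \<and> measure lebesgue (col q \<inter> maxball \<delta> q) \<ge> c" for q
    unfolding col_def by (rule someI_ex[OF ex])
  obtain \<sigma> where \<sigma>: "bij_betw \<sigma> {0..<d} (UNIV::'n set)"
    using ex_bij_betw_nat_finite[of "UNIV::'n set"] unfolding d_def by auto
  define \<sigma>' where "\<sigma>' = inv_into {0..<d} \<sigma>"
  have \<sigma>'lt: "\<sigma>' i < d" for i
    using \<sigma> unfolding \<sigma>'_def bij_betw_def by (metis atLeastLessThan_iff inv_into_into UNIV_I)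
  have \<sigma>'\<sigma>: "\<sigma>' (\<sigma> j) = j" if "j < d" for j
    using \<sigma> that unfolding \<sigma>'_def bij_betw_def by (simp add: inv_into_f_f)
  define h where "h = \<epsilon>/2"
  define v where "v x = ((\<chi> i. h * real (x (\<sigma>' i))) :: real^'n)" for x :: "nat \<Rightarrow> nat"
  define K where "K = nat \<lceil>M / c\<rceil> + 1"
  define p where "p = 3*K"
  have Kc: "M < K * c"
  proof -
    have "M / c < K" unfolding K_def by linarith
    then show ?thesis using cpos by (simp add: divide_less_eq)
  qed
  define R where "R = {(a,b). (\<forall>j<d. a j \<le> p \<and> b j \<le> p \<and> a j \<le> Suc (b j) \<and> b j \<le> Suc (a j)) \<and> col (v a) = col (v b)}"
  define lab where "lab x j = (if \<exists>y. (x,y) \<in> R\<^sup>* \<and> y j = p then 1 else (0::nat))" for x j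
  have Rcol: "col (v y) = col (v x)" if "(x,y) \<in> R\<^sup>*" for x y
    using that by (induction rule: rtrancl_induct) (auto simp: R_def)
  have nocross: "\<not> (\<exists>y. (x,y) \<in> R\<^sup>* \<and> y j = p)" if j: "j < d" and x0: "x j = 0" for x j
  proof
    assume "\<exists>y. (x,y) \<in> R\<^sup>* \<and> y j = p"
    then obtain y where y: "(x,y) \<in> R\<^sup>*" "y j = p" by blast
    have step: "\<forall>(a,b)\<in>R. b j \<le> Suc (a j)" using j unfolding R_def by auto
    have "\<forall>k\<in>{..<K}. \<exists>z. (x,z) \<in> R\<^sup>* \<and> z j = 3*k"
    proof
      fix k assume "k \<in> {..<K}"
      then have "3*k \<le> y j" using y(2) by (simp add: p_def)
      then show "\<exists>z. (x,z) \<in> R\<^sup>* \<and> z j = 3*k"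
        using rtrancl_ivt[OF y(1) step] x0 by simp
    qed
    from bchoice[OF this] obtain zf where zf0: "\<forall>k\<in>{..<K}. (x, zf k) \<in> R\<^sup>* \<and> zf k j = 3*k"
      by blast
    have zf: "(x, zf k) \<in> R\<^sup>* \<and> zf k j = 3*k" if "k \<in> {..<K}" for k
      using zf0 that by blast
    define X where "X = col (v x)"
    have XP: "X \<in> P" using col unfolding X_def by blast
    have Xm: "X \<in> sets lebesgue" "emeasure lebesgue X < ennreal M" using assms(3) XP by auto
    have "emeasure lebesgue X < \<infinity>" using order.strict_trans[OF Xm(2) ennreal_less_top] by simp
    then have Xf: "X \<in> fmeasurable lebesgue" using Xm(1) by (rule fmeasurableI[rotated])
    define A where "A k = X \<inter> maxball \<delta> (v (zf k))" for k
    have Ac: "measure lebesgue (A k) \<ge> c" if "k \<in> {..<K}" for k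
      using col[of "v (zf k)"] Rcol[of x "zf k"] zf[OF that] unfolding A_def X_def by simp
    have Asets: "A k \<in> sets lebesgue" for k
    proof -
      have "maxball \<delta> (v (zf k)) \<in> sets lebesgue"
        using lmeasurable_cbox by (simp add: maxball_cbox fmeasurableD)
      then show ?thesis unfolding A_def using Xm by auto
    qed
    have vcoord: "v z $ \<sigma> j = h * real (z j)" for z
      unfolding v_def using \<sigma>'\<sigma>[OF j] by simp
    have Adisj: "disjoint_family_on A {..<K}"
      unfolding disjoint_family_on_def
    proof (intro ballI impI)
      fix k k' assume k: "k \<in> {..<K}" and k': "k' \<in> {..<K}" and ne: "k \<noteq> k'"
      show "A k \<inter> A k' = {}"
      proof (rule ccontr)
        assume "A k \<inter> A k' \<noteq> {}"
        then obtain w where w: "w \<in> maxball \<delta> (v (zf k))" "w \<in> maxball \<delta> (v (zf k'))"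
          unfolding A_def by blast
        have "\<bar>w $ \<sigma> j - h * real (3*k)\<bar> \<le> \<delta>" "\<bar>w $ \<sigma> j - h * real (3*k')\<bar> \<le> \<delta>"
        proof -
          have "\<bar>w $ \<sigma> j - v (zf k) $ \<sigma> j\<bar> \<le> \<delta>" "\<bar>w $ \<sigma> j - v (zf k') $ \<sigma> j\<bar> \<le> \<delta>"
            using w by (simp_all add: maxball_coord)
          moreover have "v (zf k) $ \<sigma> j = h * real (3*k)" "v (zf k') $ \<sigma> j = h * real (3*k')"
            using vcoord zf[OF k] zf[OF k'] by simp_all
          ultimately show "\<bar>w $ \<sigma> j - h * real (3*k)\<bar> \<le> \<delta>" "\<bar>w $ \<sigma> j - h * real (3*k')\<bar> \<le> \<delta>"
            by simp_all
        qed
        then have "\<bar>h * real (3*k) - h * real (3*k')\<bar> \<le> 2*\<delta>" by linarith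
        moreover have "\<bar>h * real (3*k) - h * real (3*k')\<bar> = h * (3 * \<bar>real k - real k'\<bar>)"
        proof -
          have hp: "h > 0" using assms(4) unfolding h_def by simp
          have "h * real (3*k) - h * real (3*k') = h * (3 * (real k - real k'))" by (simp add: algebra_simps)
          then show ?thesis using hp by (simp add: abs_mult) (auto simp: abs_if)
        qed
        moreover have "1 \<le> \<bar>real k - real k'\<bar>" using ne by linarith
        moreover have "h > 0" using assms(4) unfolding h_def by simp
        moreover have "h * (3 * 1) \<le> h * (3 * \<bar>real k - real k'\<bar>)"
          using \<open>1 \<le> \<bar>real k - real k'\<bar>\<close> \<open>h > 0\<close> by (intro mult_left_mono) auto
        ultimately have "h * 3 \<le> 2*\<delta>" by linarith
        then show False using \<delta>pos unfolding h_def \<delta>_def by simp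
      qed
    qed
    have "measure lebesgue (\<Union>k\<in>{..<K}. A k) = (\<Sum>k\<in>{..<K}. measure lebesgue (A k))"
    proof (rule measure_finite_Union)
      show "A ` {..<K} \<subseteq> sets lebesgue" using Asets by auto
      show "disjoint_family_on A {..<K}" by (rule Adisj)
      fix k
      have "emeasure lebesgue (A k) \<le> emeasure lebesgue X"
        by (rule emeasure_mono) (auto simp: A_def Xm)
      then show "emeasure lebesgue (A k) \<noteq> \<infinity>" using Xm(2) by (auto simp: top_unique)
    qed simp
    moreover have "(\<Sum>k\<in>{..<K}. measure lebesgue (A k)) \<ge> (\<Sum>k\<in>{..<K}. c)"
      by (rule sum_mono) (rule Ac)
    moreover have "measure lebesgue (\<Union>k\<in>{..<K}. A k) \<le> measure lebesgue X"
    proof (rule measure_mono_fmeasurable[OF _ _ Xf])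
      show "(\<Union>k\<in>{..<K}. A k) \<subseteq> X" by (auto simp: A_def)
      show "(\<Union>k\<in>{..<K}. A k) \<in> sets lebesgue" using Asets by (intro sets.finite_UN) auto
    qed
    ultimately have "K * c \<le> measure lebesgue X" by simp
    moreover have "measure lebesgue X < M"
    proof -
      have "emeasure lebesgue X = ennreal (measure lebesgue X)"
        using Xm(2) by (intro emeasure_eq_ennreal_measure) (auto simp: top_unique)
      with Xm(2) show ?thesis using assms(2) by (simp add: ennreal_less_iff)
    qed
    ultimately show False using Kc by simp
  qed
  have kc: "odd (card {s. ksimplex p d s \<and> (reduced d \<circ> lab) ` s = {..d}})"
  proof (rule kuhn_combinatorial)
    show "0 < p" unfolding p_def K_def by simp
    show "\<forall>x j. (\<forall>j. x j \<le> p) \<and> j < d \<and> x j = 0 \<longrightarrow> lab x j = 0"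
      using nocross unfolding lab_def by auto
    show "\<forall>x j. (\<forall>j. x j \<le> p) \<and> j < d \<and> x j = p \<longrightarrow> lab x j = 1"
      unfolding lab_def by auto
  qed
  have "{s. ksimplex p d s \<and> (reduced d \<circ> lab) ` s = {..d}} \<noteq> {}"
    using kc by (rule odd_card_imp_not_empty)
  then obtain s where s: "ksimplex p d s" "(reduced d \<circ> lab) ` s = {..d}" by blast
  from s(1) obtain bs us where ks: "kuhn_simplex p d bs us s" by (auto elim: ksimplex.cases)
  interpret kuhn_simplex p d bs us s by (rule ks)
  have cs: "card s = Suc d" using ksimplex_card[OF s(1)] .
  have fs: "finite s" by (rule card_ge_0_finite) (simp add: cs)
  have injrl: "inj_on (reduced d \<circ> lab) s"
    unfolding inj_on_iff_eq_card[OF fs] s(2) cs by simp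
  have injcol: "inj_on (\<lambda>x. col (v x)) s"
  proof (rule inj_onI)
    fix a b assume a: "a \<in> s" and b: "b \<in> s" and eq: "col (v a) = col (v b)"
    have ap: "a j \<le> Suc (b j)" "b j \<le> Suc (a j)" "a j \<le> p" "b j \<le> p" for j
      using le_Suc_base[OF a, of j] base_le[OF b, of j] le_Suc_base[OF b, of j] base_le[OF a, of j]
        s_le_p[OF a, of j] s_le_p[OF b, of j] by linarith+
    have ab: "(a,b) \<in> R" and ba: "(b,a) \<in> R"
      unfolding R_def using ap eq by auto
    have "lab a = lab b"
    proof (intro ext)
      fix j
      have "(\<exists>y. (a,y) \<in> R\<^sup>* \<and> y j = p) \<longleftrightarrow> (\<exists>y. (b,y) \<in> R\<^sup>* \<and> y j = p)"
        using converse_rtrancl_into_rtrancl[OF ab] converse_rtrancl_into_rtrancl[OF ba] by blast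
      then show "lab a j = lab b j" unfolding lab_def by simp
    qed
    then have "(reduced d \<circ> lab) a = (reduced d \<circ> lab) b" by simp
    then show "a = b" using inj_onD[OF injrl _ a b] by blast
  qed
  have sub: "(\<lambda>x. col (v x)) ` s \<subseteq> nbhd P \<epsilon> (v bs)"
  proof
    fix X assume "X \<in> (\<lambda>x. col (v x)) ` s"
    then obtain a where a: "a \<in> s" "X = col (v a)" by blast
    have "measure lebesgue (X \<inter> maxball \<delta> (v a)) > 0" using col[of "v a"] cpos a(2) by simp
    then have "X \<inter> maxball \<delta> (v a) \<noteq> {}" by auto
    then obtain y where y: "y \<in> X" "y \<in> maxball \<delta> (v a)" by blast
    have "y \<in> maxball \<epsilon> (v bs)"
      unfolding maxball_coord
    proof
      fix i
      have "\<bar>y$i - v a $ i\<bar> \<le> \<delta>" using y(2) by (simp add: maxball_coord)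
      moreover have "\<bar>v a $ i - v bs $ i\<bar> \<le> h"
      proof -
        have "bs (\<sigma>' i) \<le> a (\<sigma>' i)" "a (\<sigma>' i) \<le> Suc (bs (\<sigma>' i))"
          using base_le[OF a(1)] le_Suc_base[OF a(1)] by auto
        then have "\<bar>real (a (\<sigma>' i)) - real (bs (\<sigma>' i))\<bar> \<le> 1" by linarith
        then have "h * \<bar>real (a (\<sigma>' i)) - real (bs (\<sigma>' i))\<bar> \<le> h * 1"
          using assms(4) unfolding h_def by (intro mult_left_mono) auto
        moreover have "v a $ i - v bs $ i = h * (real (a (\<sigma>' i)) - real (bs (\<sigma>' i)))"
          unfolding v_def by (simp add: algebra_simps)
        moreover have "h > 0" using assms(4) unfolding h_def by simp
        ultimately show ?thesis by (simp add: abs_mult)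
      qed
      ultimately show "\<bar>y$i - v bs $ i\<bar> \<le> \<epsilon>" unfolding h_def \<delta>_def by linarith
    qed
    then show "X \<in> nbhd P \<epsilon> (v bs)" using y(1) col[of "v a"] a(2) unfolding nbhd_def by blast
  qed
  have "Suc d = card ((\<lambda>x. col (v x)) ` s)" using card_image[OF injcol] cs by simp
  also have "\<dots> \<le> card (nbhd P \<epsilon> (v bs))" using card_mono[OF _ sub] H by blast
  also have "\<dots> \<le> d" using H unfolding d_def by blast
  finally show False by simp
qed

end
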